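(* Consider a discrete-time random walk $(X_n)_{n\ge0}$ on $\mathbb{Z}$ with $X_0=0$ almost surely and i.i.d. increments, $\mathbb{P}(X_{n+1}-X_n=i)=p_i$, where there is a fixed positive integer $l$ with $p_i=0$ for $|i|>l$. Suppose the walk has positive bias, $\sum_{i=-l}^{l}ip_i>0$. Let $\gamma\in(0,1)$ be a solution of $$f(\gamma):=\sum_{i=1}^{l}\Big(\sum_{j=1}^{i}\gamma^j\Big)p_i-\sum_{i=1}^{l}\Big(\sum_{j=1}^{i}\gamma^{-j}\Big)p_{-i}=0$$ (such a solution exists). Then for every integer $\xi>0$, $$\mathbb{P}(\exists n\ \text{s.t.}\ X_n\le-\xi)\le\frac{1}{\gamma^{-\xi-1}-\gamma^{-1}+1}.$$ *)

theory Defs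
  imports "HOL-Probability.Probability"
begin

definition rw_f :: "nat \<Rightarrow> (int \<Rightarrow> real) \<Rightarrow> real \<Rightarrow> real" where
  "rw_f l p g =
     (\<Sum>i=1..l. (\<Sum>j=1..i. g ^ j) * p (int i))
   - (\<Sum>i=1..l. (\<Sum>j=1..i. inverse g ^ j) * p (- int i))"

end

theory Submission imports Defs begin

definition psi :: "real \<Rightarrow> int \<Rightarrow> real" where
  "psi g y = (if 0 \<le> y then g powi y * g else g powi y - 1 + g)"

definition cc :: "real \<Rightarrow> int \<Rightarrow> real" where
  "cc g i = (if 0 < i then g else 1)"

lemma powi_ge1: "0 < (g::real) \<Longrightarrow> g < 1 \<Longrightarrow> y \<le> 0 \<Longrightarrow> 1 \<le> g powi y"
proof -
  assume a: "0 < g" "g < 1" "y \<le> 0"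
  have "g powi y = inverse g powi (-y)" by (simp add: power_int_minus power_int_inverse)
  moreover have "1 \<le> inverse g" using a by (simp add: one_le_inverse)
  ultimately show ?thesis using a by simp
qed

lemma powi_le1: "0 < (g::real) \<Longrightarrow> g < 1 \<Longrightarrow> 0 \<le> y \<Longrightarrow> g powi y \<le> 1"
  by (simp add: power_int_le_one)

lemma psi_key:
  assumes g: "0 < g" "g < 1"
  shows "psi g (x + i) - psi g x \<le> - (g powi x) * cc g i * (1 - g powi i)"
proof -
  define a where "a = g powi x"
  define b where "b = g powi i"
  have ab: "g powi (x + i) = a * b" using g by (simp add: a_def b_def power_int_add)
  have a0: "a > 0" using g by (simp add: a_def)
  have b0: "b > 0" using g by (simp add: b_def)
  have ia: "0 \<le> x \<Longrightarrow> a \<le> 1" using g powi_le1 unfolding a_def by auto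
  have ia2: "x \<le> 0 \<Longrightarrow> 1 \<le> a" using g powi_ge1 unfolding a_def by auto
  have ib: "0 \<le> i \<Longrightarrow> b \<le> 1" using g powi_le1 unfolding b_def by auto
  have ib2: "i \<le> 0 \<Longrightarrow> 1 \<le> b" using g powi_ge1 unfolding b_def by auto
  show ?thesis
  proof (cases "0 \<le> x")
    case True
    note T = True
    show ?thesis
    proof (cases "0 \<le> x + i")
      case True
      show ?thesis
      proof (cases "0 < i")
        case True
        then show ?thesis using T \<open>0 \<le> x + i\<close> unfolding psi_def cc_def ab a_def[symmetric] b_def[symmetric]
          by (simp add: algebra_simps)
      next
        case False
        have "0 \<le> a * (b - 1) * (1 - g)" using a0 ib2 False g by simp
        then show ?thesis using T \<open>0 \<le> x + i\<close> False unfolding psi_def cc_def ab a_def[symmetric] b_def[symmetric]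
          by (simp add: algebra_simps)
      qed
    next
      case False
      have "0 \<le> (1 - a) * (1 - g)" using ia T g by simp
      then show ?thesis using T False unfolding psi_def cc_def ab a_def[symmetric] b_def[symmetric]
        by (simp add: algebra_simps)
    qed
  next
    case False
    note F = False
    show ?thesis
    proof (cases "0 \<le> x + i")
      case True
      have "0 \<le> (a - 1) * (1 - g)" using ia2 F g by simp
      then show ?thesis using F True unfolding psi_def cc_def ab a_def[symmetric] b_def[symmetric]
        by (simp add: algebra_simps)
    next
      case False
      show ?thesis
      proof (cases "0 < i")
        case True
        have "0 \<le> a * (1 - b) * (1 - g)" using a0 ib True g by simp
        then show ?thesis using F \<open>\<not> 0 \<le> x + i\<close> True unfolding psi_def cc_def ab a_def[symmetric] b_def[symmetric]
          by (simp add: algebra_simps)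
      next
        case False
        then show ?thesis using F \<open>\<not> 0 \<le> x + i\<close> unfolding psi_def cc_def ab a_def[symmetric] b_def[symmetric]
          by (simp add: algebra_simps)
      qed
    qed
  qed
qed

lemma psi_pos: "0 < g \<Longrightarrow> g < 1 \<Longrightarrow> 0 < psi g y"
  using powi_ge1[of g y] by (auto simp: psi_def)

lemma psi_antimono:
  assumes g: "0 < g" "g < 1" and yz: "y \<le> z"
  shows "psi g z \<le> psi g y"
proof -
  have m: "g powi z \<le> g powi y"
    using power_int_strict_decreasing[of y z g] g yz by (cases "y = z") auto
  show ?thesis
  proof (cases "0 \<le> y")
    case True then show ?thesis using m yz g by (simp add: psi_def)
  next
    case False
    show ?thesis
    proof (cases "0 \<le> z")
      case True
      have "g powi z \<le> 1" using powi_le1 True g by auto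
      hence "g powi z * g \<le> g" using g by (simp add: mult_le_cancel_right1)
      moreover have "1 \<le> g powi y" using powi_ge1 False g by auto
      ultimately show ?thesis using True False by (simp add: psi_def)
    next
      case False then show ?thesis using m \<open>\<not> 0 \<le> y\<close> by (simp add: psi_def)
    qed
  qed
qed

lemma sum_sym_split:
  "(\<Sum>i\<in>{- int l..int l}. g i) = g 0 + (\<Sum>i=1..l. g (int i)) + (\<Sum>i=1..l. g (- int i))"
proof (induction l)
  case 0 then show ?case by simp
next
  case (Suc l)
  have E: "{- int (Suc l)..int (Suc l)} = insert (- int (Suc l)) (insert (int (Suc l)) {- int l..int l})"
    by auto
  have "(\<Sum>i\<in>{- int (Suc l)..int (Suc l)}. g i) = g (- int (Suc l)) + (g (int (Suc l)) + (\<Sum>i\<in>{- int l..int l}. g i))"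
    by (subst E) simp
  then show ?case using Suc by (simp add: ac_simps)
qed

lemma geo1: "(1 - g) * (\<Sum>j=1..i. (g::real) ^ j) = g * (1 - g ^ i)"
proof (induction i)
  case 0 then show ?case by simp
next
  case (Suc i)
  have "(1 - g) * (\<Sum>j=1..Suc i. g ^ j) = (1 - g) * (\<Sum>j=1..i. g ^ j) + (1 - g) * g ^ Suc i"
    by (simp add: algebra_simps)
  also have "\<dots> = g * (1 - g ^ i) + (1 - g) * g ^ Suc i" using Suc by simp
  also have "\<dots> = g * (1 - g ^ Suc i)" by (simp add: algebra_simps)
  finally show ?case .
qed

lemma geo2: "0 < (g::real) \<Longrightarrow> (1 - g) * (\<Sum>j=1..i. inverse g ^ j) = - (1 - inverse g ^ i)"
proof (induction i)
  case 0 then show ?case by simp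
next
  case (Suc i)
  have "(1 - g) * (\<Sum>j=1..Suc i. inverse g ^ j) = (1 - g) * (\<Sum>j=1..i. inverse g ^ j) + (1 - g) * inverse g ^ Suc i"
    by (simp add: algebra_simps)
  also have "\<dots> = - (1 - inverse g ^ i) + (1 - g) * inverse g ^ Suc i" using Suc by simp
  also have "\<dots> = - (1 - inverse g ^ Suc i)" using Suc.prems by (simp add: field_simps)
  finally show ?case .
qed

lemma f_reform:
  assumes g: "0 < g"
  shows "(1 - g) * rw_f l p g = (\<Sum>i\<in>{- int l..int l}. p i * cc g i * (1 - g powi i))"
proof -
  have "(1 - g) * rw_f l p g = (\<Sum>i=1..l. p (int i) * ((1 - g) * (\<Sum>j=1..i. g ^ j)))
     - (\<Sum>i=1..l. p (- int i) * ((1 - g) * (\<Sum>j=1..i. inverse g ^ j)))"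
  proof -
    have 1: "(1 - g) * (\<Sum>i=1..l. (\<Sum>j=1..i. g ^ j) * p (int i)) = (\<Sum>i=1..l. p (int i) * ((1 - g) * (\<Sum>j=1..i. g ^ j)))"
      by (subst sum_distrib_left, rule sum.cong) (auto simp: mult_ac)
    have 2: "(1 - g) * (\<Sum>i=1..l. (\<Sum>j=1..i. inverse g ^ j) * p (- int i)) = (\<Sum>i=1..l. p (- int i) * ((1 - g) * (\<Sum>j=1..i. inverse g ^ j)))"
      by (subst sum_distrib_left, rule sum.cong) (auto simp: mult_ac)
    show ?thesis unfolding rw_f_def right_diff_distrib 1 2 ..
  qed
  also have "\<dots> = (\<Sum>i=1..l. p (int i) * (g * (1 - g ^ i)))
     + (\<Sum>i=1..l. p (- int i) * (1 - inverse g ^ i))"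
    by (simp only: geo1 geo2[OF g] mult_minus_right sum_negf diff_minus_eq_add)
  also have "\<dots> = (\<Sum>i=1..l. p (int i) * cc g (int i) * (1 - g powi (int i)))
     + (\<Sum>i=1..l. p (- int i) * cc g (- int i) * (1 - g powi (- int i)))"
    by (intro arg_cong2[where f="(+)"] sum.cong) (auto simp: cc_def power_int_minus power_inverse)
  finally show ?thesis by (simp add: sum_sym_split[of _ l] cc_def)
qed


lemma superharm:
  assumes g: "0 < g" "g < 1" and f0: "rw_f l p g = 0" and pn: "\<And>i. 0 \<le> p i"
    and ps: "(\<Sum>i\<in>{- int l..int l}. p i) = 1"
  shows "(\<Sum>i\<in>{- int l..int l}. p i * psi g (x + i)) \<le> psi g x"
proof -
  have "(\<Sum>i\<in>{- int l..int l}. p i * psi g (x + i)) - psi g x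
      = (\<Sum>i\<in>{- int l..int l}. p i * (psi g (x + i) - psi g x))"
    using ps by (simp add: right_diff_distrib sum_subtractf flip: sum_distrib_right)
  also have "\<dots> \<le> (\<Sum>i\<in>{- int l..int l}. p i * (- (g powi x) * cc g i * (1 - g powi i)))"
    by (intro sum_mono mult_left_mono psi_key g pn)
  also have "\<dots> = - (g powi x) * ((1 - g) * rw_f l p g)"
    by (simp add: f_reform[OF g(1)] sum_distrib_left mult_ac)
  also have "\<dots> = 0" using f0 by simp
  finally show ?thesis by simp
qed

definition LL :: "int set \<Rightarrow> nat \<Rightarrow> int list set" where
  "LL R N = {s. set s \<subseteq> R \<and> length s = N}"

definition hit :: "int \<Rightarrow> int \<Rightarrow> int list \<Rightarrow> bool" where
  "hit xi x s = (\<exists>n\<le>length s. x + sum_list (take n s) \<le> - xi)"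

definition ww :: "(int \<Rightarrow> real) \<Rightarrow> int list \<Rightarrow> real" where
  "ww p s = (\<Prod>k<length s. p (s ! k))"

definition VV :: "(int \<Rightarrow> real) \<Rightarrow> int \<Rightarrow> int set \<Rightarrow> nat \<Rightarrow> int \<Rightarrow> real" where
  "VV p xi R N x = (\<Sum>s\<in>LL R N. if hit xi x s then ww p s else 0)"

lemma LL_0: "LL R 0 = {[]}" by (auto simp: LL_def)

lemma sum_LL_Suc:
  assumes "finite R"
  shows "(\<Sum>s\<in>LL R (Suc N). F s) = (\<Sum>i\<in>R. \<Sum>s\<in>LL R N. F (i # s))"
proof -
  have "(\<Sum>s\<in>LL R (Suc N). F s) = (\<Sum>s\<in>(\<lambda>(xs, n). n#xs) ` (LL R N \<times> R). F s)"
    unfolding LL_def lists_length_Suc_eq ..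
  also have "\<dots> = (\<Sum>(xs, n)\<in>LL R N \<times> R. F (n # xs))"
    by (subst sum.reindex) (auto simp: inj_on_def intro!: sum.cong split: prod.splits)
  also have "\<dots> = (\<Sum>xs\<in>LL R N. \<Sum>n\<in>R. F (n # xs))"
    by (simp add: sum.cartesian_product)
  also have "\<dots> = (\<Sum>i\<in>R. \<Sum>s\<in>LL R N. F (i # s))"
    by (rule sum.swap)
  finally show ?thesis .
qed

lemma ww_Cons: "ww p (i # s) = p i * ww p s"
  unfolding ww_def length_Cons prod.lessThan_Suc_shift by simp

lemma hit_Cons: "hit xi x (i # s) = (x \<le> - xi \<or> hit xi (x + i) s)"
  unfolding hit_def
  apply (rule iffI)
   apply (elim exE conjE)
  subgoal for n by (cases n) (auto simp: add.assoc)
  apply (elim disjE exE conjE)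
   apply (rule exI[of _ 0])
   apply simp
  subgoal for n by (rule exI[of _ "Suc n"]) (simp add: add.assoc)
  done

lemma hit_Nil: "hit xi x [] = (x \<le> - xi)" by (simp add: hit_def)

lemma total_ww:
  assumes "finite R" "(\<Sum>i\<in>R. p i) = 1"
  shows "(\<Sum>s\<in>LL R N. ww p s) = 1"
proof (induction N)
  case 0 then show ?case by (simp add: LL_0 ww_def)
next
  case (Suc N)
  then show ?case using assms by (simp add: sum_LL_Suc ww_Cons flip: sum_distrib_left sum_distrib_right)
qed

lemma VV_bound:
  assumes g: "0 < g" "g < 1" and f0: "rw_f l p g = 0" and pn: "\<And>i. 0 \<le> p i"
    and ps: "(\<Sum>i\<in>{- int l..int l}. p i) = 1"
  shows "psi g (- xi) * VV p xi {- int l..int l} N x \<le> psi g x"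
proof (induction N arbitrary: x)
  case 0
  show ?case
    using psi_antimono[OF g, of x "- xi"] psi_pos[OF g, of x]
    unfolding VV_def LL_0 by (simp add: hit_Nil ww_def)
next
  case (Suc N)
  let ?R = "{- int l..int l}"
  show ?case
  proof (cases "x \<le> - xi")
    case True
    have "VV p xi ?R (Suc N) x = (\<Sum>s\<in>LL ?R (Suc N). ww p s)"
      unfolding VV_def
    proof (rule sum.cong)
      fix s assume "s \<in> LL ?R (Suc N)"
      then obtain j s' where "s = j # s'" by (cases s) (auto simp: LL_def)
      then show "(if hit xi x s then ww p s else 0) = ww p s" using True by (simp add: hit_Cons)
    qed simp
    also have "\<dots> = 1" by (rule total_ww[OF _ ps]) simp
    finally show ?thesis using psi_antimono[OF g True] by simp
  next
    case False
    have "VV p xi ?R (Suc N) x = (\<Sum>i\<in>?R. p i * VV p xi ?R N (x + i))"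
      unfolding VV_def by (simp add: sum_LL_Suc hit_Cons False ww_Cons sum_distrib_left if_distrib cong: if_cong)
    hence "psi g (- xi) * VV p xi ?R (Suc N) x = (\<Sum>i\<in>?R. p i * (psi g (- xi) * VV p xi ?R N (x + i)))"
      by (simp add: sum_distrib_left mult_ac)
    also have "\<dots> \<le> (\<Sum>i\<in>?R. p i * psi g (x + i))"
      by (intro sum_mono mult_left_mono Suc pn)
    also have "\<dots> \<le> psi g x" by (rule superharm[OF g f0 pn ps])
    finally show ?thesis .
  qed
qed


theorem mainTheorem8:
  fixes M :: "'a measure" and X :: "nat \<Rightarrow> 'a \<Rightarrow> int"
    and p :: "int \<Rightarrow> real" and l :: nat and \<gamma> :: real and \<xi> :: int
  assumes "prob_space M"
    and meas: "\<And>n. X n \<in> measurable M (count_space UNIV)"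
    and start: "AE \<omega> in M. X 0 \<omega> = 0"
    and indep: "prob_space.indep_vars M (\<lambda>_. count_space UNIV)
                  (\<lambda>n \<omega>. X (Suc n) \<omega> - X n \<omega>) UNIV"
    and distr: "\<And>n i. measure M {\<omega> \<in> space M. X (Suc n) \<omega> - X n \<omega> = i} = p i"
    and l_pos: "l > 0"
    and bounded: "\<And>i. \<bar>i\<bar> > int l \<Longrightarrow> p i = 0"
    and bias: "(\<Sum>i = - int l..int l. real_of_int i * p i) > 0"
    and gamma: "0 < \<gamma>" "\<gamma> < 1" "rw_f l p \<gamma> = 0"
    and xi: "\<xi> > 0"
  shows "measure M {\<omega> \<in> space M. \<exists>n. X n \<omega> \<le> - \<xi>}
           \<le> 1 / (\<gamma> powi (- \<xi> - 1) - \<gamma> powi (-1) + 1)"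
proof -
  interpret prob_space M by fact
  define Y where "Y = (\<lambda>n \<omega>. X (Suc n) \<omega> - X n \<omega>)"
  define R where "R = {- int l..int l}"
  have indY: "indep_vars (\<lambda>_. count_space UNIV) Y UNIV" using indep unfolding Y_def .
  have Ymeas: "Y n \<in> measurable M (count_space UNIV)" for n
    using indY unfolding indep_vars_def2 by auto
  have Yev: "{\<omega> \<in> space M. Y n \<omega> = i} \<in> sets M" for n i
  proof -
    have "{\<omega> \<in> space M. Y n \<omega> = i} = Y n -` {i} \<inter> space M" by auto
    then show ?thesis using measurable_sets[OF Ymeas] by simp
  qed
  have pY: "prob {\<omega> \<in> space M. Y n \<omega> = i} = p i" for n i
    using distr unfolding Y_def by simp
  have pn: "0 \<le> p i" for i using pY[of 0 i] by (metis measure_nonneg)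
  have AE_R: "AE \<omega> in M. \<forall>n. Y n \<omega> \<in> R"
  proof (subst AE_all_countable, rule allI)
    fix n
    have "AE \<omega> in M. \<forall>i\<in>UNIV - R. Y n \<omega> \<noteq> i"
    proof (rule AE_ball_countable')
      fix i assume "i \<in> UNIV - R"
      then have "p i = 0" using bounded by (auto simp: R_def)
      then have "emeasure M {\<omega> \<in> space M. Y n \<omega> = i} = 0"
        using pY[of n i] by (simp add: emeasure_eq_measure)
      then show "AE \<omega> in M. Y n \<omega> \<noteq> i"
        by (subst AE_iff_measurable[OF Yev]) auto
    qed simp
    then show "AE \<omega> in M. Y n \<omega> \<in> R" by eventually_elim auto
  qed
  have AE_X: "AE \<omega> in M. \<forall>n. X n \<omega> = (\<Sum>k<n. Y k \<omega>)"
    using start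
  proof eventually_elim
    case (elim \<omega>)
    show ?case
    proof
      fix n show "X n \<omega> = (\<Sum>k<n. Y k \<omega>)"
        by (induction n) (auto simp: elim Y_def)
    qed
  qed
  have ps: "(\<Sum>i\<in>R. p i) = 1"
  proof -
    have "1 = prob (space M)" by (rule prob_space[symmetric])
    also have "\<dots> = prob (\<Union>i\<in>R. {\<omega> \<in> space M. Y 0 \<omega> = i})"
      by (rule measure_eq_AE) (use AE_R in \<open>auto intro: Yev\<close>)
    also have "\<dots> = (\<Sum>i\<in>R. prob {\<omega> \<in> space M. Y 0 \<omega> = i})"
      by (rule finite_measure_finite_Union) (auto simp: R_def disjoint_family_on_def intro: Yev)
    finally show ?thesis by (simp add: pY)
  qed
  define E where "E s = {\<omega> \<in> space M. \<forall>k<length s. Y k \<omega> = s ! k}" for s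
  have Esets: "E s \<in> sets M" for s
  proof -
    have "E s = space M \<inter> (\<Inter>k\<in>{..<length s}. {\<omega> \<in> space M. Y k \<omega> = s ! k})"
      by (auto simp: E_def)
    then show ?thesis using Yev by auto
  qed
  have probE: "prob (E s) = ww p s" for s
  proof (cases "s = []")
    case True then show ?thesis by (simp add: E_def ww_def prob_space)
  next
    case False
    have ie: "indep_events (\<lambda>k. {\<omega> \<in> space M. Y k \<omega> = s ! k}) UNIV"
      by (rule indep_eventsI_indep_vars[OF indY]) auto
    have "E s = (\<Inter>k\<in>{..<length s}. {\<omega> \<in> space M. Y k \<omega> = s ! k})"
      using False by (auto simp: E_def)
    then have "prob (E s) = (\<Prod>k\<in>{..<length s}. prob {\<omega> \<in> space M. Y k \<omega> = s ! k})"
      using ie False unfolding indep_events_def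
      by (elim conjE) (drule spec[of _ "{..<length s}"], simp add: lessThan_empty_iff)
    then show ?thesis by (simp add: pY ww_def)
  qed
  define A where "A N = {\<omega> \<in> space M. \<exists>n\<le>N. X n \<omega> \<le> - \<xi>}" for N
  have Asets: "A N \<in> sets M" for N
  proof -
    have "A N = (\<Union>n\<in>{..N}. X n -` {..- \<xi>} \<inter> space M)" by (auto simp: A_def)
    moreover have "(\<Union>n\<in>{..N}. X n -` {..- \<xi>} \<inter> space M) \<in> sets M"
      using measurable_sets[OF meas] by (intro sets.finite_UN) auto
    ultimately show ?thesis by simp
  qed
  have measA: "prob (A N) = VV p \<xi> R N 0" for N
  proof -
    let ?S = "{s \<in> LL R N. hit \<xi> 0 s}"
    have finL: "finite (LL R N)" unfolding LL_def R_def by (rule finite_lists_length_eq) simp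
    have finS: "finite ?S" using finL by simp
    have "prob (A N) = prob (\<Union>s\<in>?S. E s)"
    proof (rule measure_eq_AE)
      show "AE \<omega> in M. (\<omega> \<in> A N) = (\<omega> \<in> (\<Union>s\<in>?S. E s))"
        using AE_R AE_X
      proof eventually_elim
        case (elim \<omega>)
        define s0 where "s0 = map (\<lambda>k. Y k \<omega>) [0..<N]"
        have s0L: "s0 \<in> LL R N" using elim by (auto simp: s0_def LL_def)
        have take: "sum_list (take n s0) = (\<Sum>k<n. Y k \<omega>)" if "n \<le> N" for n
          using that by (simp add: s0_def take_map min_def atLeast0LessThan[symmetric]
              sum_set_upt_conv_sum_list_nat[symmetric])
        have hit0: "hit \<xi> 0 s0 \<longleftrightarrow> (\<exists>n\<le>N. X n \<omega> \<le> - \<xi>)"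
          unfolding hit_def using take elim by (auto simp: s0_def)
        have uniq: "s = s0" if "s \<in> LL R N" "\<omega> \<in> E s" for s
          using that by (intro nth_equalityI) (auto simp: LL_def E_def s0_def)
        show ?case
        proof (cases "\<omega> \<in> space M")
          case False then show ?thesis by (auto simp: A_def E_def)
        next
          case True
          have "\<omega> \<in> A N \<longleftrightarrow> hit \<xi> 0 s0" using hit0 True by (simp add: A_def)
          also have "\<dots> \<longleftrightarrow> \<omega> \<in> (\<Union>s\<in>?S. E s)"
          proof
            assume h: "hit \<xi> 0 s0"
            have "\<omega> \<in> E s0" using True by (simp add: E_def s0_def)
            then show "\<omega> \<in> (\<Union>s\<in>?S. E s)" using h s0L by blast
          next
            assume "\<omega> \<in> (\<Union>s\<in>?S. E s)"
            then obtain s where "s \<in> ?S" "\<omega> \<in> E s" by blast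
            then show "hit \<xi> 0 s0" using uniq by blast
          qed
          finally show ?thesis .
        qed
      qed
    qed (use Asets Esets finS in auto)
    also have "\<dots> = (\<Sum>s\<in>?S. prob (E s))"
    proof (rule finite_measure_finite_Union[OF finS])
      show "E ` ?S \<subseteq> sets M" using Esets by auto
      show "disjoint_family_on E ?S"
        unfolding disjoint_family_on_def
      proof (intro ballI impI)
        fix s t assume st: "s \<in> ?S" "t \<in> ?S" "s \<noteq> t"
        then have "length s = length t" by (auto simp: LL_def)
        show "E s \<inter> E t = {}"
        proof (rule ccontr)
          assume "E s \<inter> E t \<noteq> {}"
          then obtain \<omega> where "\<omega> \<in> E s" "\<omega> \<in> E t" by blast
          then have "s = t" using \<open>length s = length t\<close> by (intro nth_equalityI) (auto simp: E_def)
          with st show False by simp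
        qed
      qed
    qed
    also have "\<dots> = VV p \<xi> R N 0"
      unfolding VV_def probE using finL by (simp add: sum.inter_filter[symmetric])
    finally show ?thesis .
  qed
  have psipos: "0 < psi \<gamma> (- \<xi>)" by (rule psi_pos[OF gamma(1,2)])
  have bnd: "prob (A N) \<le> psi \<gamma> 0 / psi \<gamma> (- \<xi>)" for N
  proof -
    have "VV p \<xi> R N 0 * psi \<gamma> (- \<xi>) \<le> psi \<gamma> 0"
      using VV_bound[OF gamma pn ps[unfolded R_def], of \<xi> N 0] unfolding R_def by (metis mult.commute)
    then show ?thesis unfolding measA by (subst pos_le_divide_eq[OF psipos])
  qed
  have lim: "(\<lambda>N. prob (A N)) \<longlonglongrightarrow> prob (\<Union>N. A N)"
  proof (rule finite_Lim_measure_incseq)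
    show "range A \<subseteq> sets M" using Asets by auto
    show "incseq A" by (rule incseq_SucI) (auto simp: A_def le_Suc_eq)
  qed
  have "prob (\<Union>N. A N) \<le> psi \<gamma> 0 / psi \<gamma> (- \<xi>)"
    by (rule LIMSEQ_le_const2[OF lim]) (use bnd in auto)
  moreover have "(\<Union>N. A N) = {\<omega> \<in> space M. \<exists>n. X n \<omega> \<le> - \<xi>}" by (auto simp: A_def)
  moreover have "psi \<gamma> 0 / psi \<gamma> (- \<xi>) = 1 / (\<gamma> powi (- \<xi> - 1) - \<gamma> powi (-1) + 1)"
  proof -
    define a where "a = \<gamma> powi (- \<xi>)"
    have e1: "\<gamma> powi (- \<xi> - 1) = a / \<gamma>" using gamma by (simp add: power_int_diff a_def)
    have e2: "\<gamma> powi (-1) = 1 / \<gamma>" by (simp add: power_int_minus_divide)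
    have p0: "psi \<gamma> 0 = \<gamma>" by (simp add: psi_def)
    have pxi: "psi \<gamma> (- \<xi>) = a - 1 + \<gamma>" using xi by (simp add: psi_def a_def)
    have pos: "a - 1 + \<gamma> > 0" using psipos pxi by simp
    have q: "a / \<gamma> - 1 / \<gamma> + 1 = (a - 1 + \<gamma>) / \<gamma>" using gamma by (simp add: diff_divide_distrib add_divide_distrib)
    show ?thesis unfolding e1 e2 p0 pxi q by simp
  qed
  ultimately show ?thesis by simp
qed

end
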